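(* Let $M>0$ and let $W_{-1}$ denote the branch $-1$ of the Lambert $W$ function. For any two nondegenerate $n$-dimensional Gaussian distributions $\mathcal{N}(\bm\mu_1,\bm\Sigma_1)$ and $\mathcal{N}(\bm\mu_2,\bm\Sigma_2)$ (any $n\ge1$), if $KL(\mathcal{N}(\bm\mu_1,\bm\Sigma_1)\,\|\,\mathcal{N}(\bm\mu_2,\bm\Sigma_2))\ge M$, then $$KL(\mathcal{N}(\bm\mu_2,\bm\Sigma_2)\,\|\,\mathcal{N}(\bm\mu_1,\bm\Sigma_1))\ge \frac12\left\{\frac{1}{-W_{-1}(-e^{-(1+2M)})}-\log\frac{1}{-W_{-1}(-e^{-(1+2M)})}-1\right\}.$$
   Context: $KL(p\|q)=\int p\log(p/q)$ is the Kullback–Leibler divergence. The Lambert $W$ function is the (multivalued) inverse of $y=xe^x$; on real arguments in $[-1/e,0)$ it has two real branches: the principal branch $W_0$ (values in $[-1,0)$) and the branch $W_{-1}$ (values in $(-\infty,-1]$). *)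

theory Defs
  imports "HOL-Analysis.Analysis"
begin

definition lambert_W_m1 :: "real \<Rightarrow> real" where
  "lambert_W_m1 y = (THE w. w \<le> -1 \<and> w * exp w = y)"

definition pos_def_matrix :: "real^'n^'n \<Rightarrow> bool" where
  "pos_def_matrix S \<longleftrightarrow> transpose S = S \<and> (\<forall>x. x \<noteq> 0 \<longrightarrow> x \<bullet> (S *v x) > 0)"

definition gauss_density :: "real^'n \<Rightarrow> real^'n^'n \<Rightarrow> real^'n \<Rightarrow> real" where
  "gauss_density mu S x =
     exp (- (1/2) * ((x - mu) \<bullet> (matrix_inv S *v (x - mu))))
     / sqrt ((2 * pi) ^ CARD('n) * det S)"

definition KL :: "('a::euclidean_space \<Rightarrow> real) \<Rightarrow> ('a \<Rightarrow> real) \<Rightarrow> real" where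
  "KL p q = (\<integral>x. p x * ln (p x / q x) \<partial>lborel)"

end

theory Submission
  imports Defs "HOL-Probability.Distributions"
begin


definition ff :: "real \<Rightarrow> real" where "ff x = x - ln x - 1"

lemma ff_nonneg: "x > 0 \<Longrightarrow> ff x \<ge> 0"
  using ln_le_minus_one[of x] by (simp add: ff_def)

lemma ff_inv: "x > 0 \<Longrightarrow> ff (1/x) = 1/x + ln x - 1"
  by (simp add: ff_def ln_div)

lemma ff_strict_mono: assumes "1 \<le> a" "a < b" shows "ff a < ff b"
proof (rule DERIV_pos_imp_increasing_open[OF assms(2)])
  fix x assume x: "a < x" "x < b"
  show "\<exists>y. (ff has_real_derivative y) (at x) \<and> 0 < y"
    unfolding ff_def using x assms
    by (intro exI[of _ "1 - 1/x"]) (auto intro!: derivative_eq_intros simp: field_simps)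
next
  show "continuous_on {a..b} ff" unfolding ff_def using assms
    by (intro continuous_intros) auto
qed

lemma ff_mono: "1 \<le> a \<Longrightarrow> a \<le> b \<Longrightarrow> ff a \<le> ff b"
  using ff_strict_mono[of a b] by (cases "a = b") auto

lemma ff_mono_iff: "1 \<le> a \<Longrightarrow> 1 \<le> b \<Longrightarrow> ff a \<le> ff b \<longleftrightarrow> a \<le> b"
  using ff_strict_mono[of a b] ff_strict_mono[of b a] by (cases a b rule: linorder_cases) auto

lemma ff_inj: "1 \<le> a \<Longrightarrow> 1 \<le> b \<Longrightarrow> ff a = ff b \<Longrightarrow> a = b"
  using ff_mono_iff[of a b] ff_mono_iff[of b a] by auto

lemma ff_exists: assumes "y \<ge> 0" shows "\<exists>L\<ge>1. ff L = y"
proof -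
  define s where "s = y + 2"
  have s: "s \<ge> 2" unfolding s_def using assms by simp
  have "ln (s^2) = 2 * ln s" using s by (simp add: ln_realpow)
  also have "\<dots> \<le> 2 * (s - 1)" using ln_le_minus_one[of s] s by simp
  finally have "ff (s^2) \<ge> (s - 1)^2" unfolding ff_def
    by (simp add: power2_eq_square algebra_simps)
  moreover have "(s - 1)^2 \<ge> y" unfolding s_def using assms by (simp add: power2_eq_square algebra_simps)
  ultimately have up: "y \<le> ff (s^2)" by linarith
  have lo: "ff 1 \<le> y" using assms by (simp add: ff_def)
  have "1 \<le> s^2" using mult_mono[of 1 s 1 s] s by (simp add: power2_eq_square)
  moreover have "continuous_on {1..s^2} ff" unfolding ff_def
    by (intro continuous_intros) auto
  ultimately obtain L where "L \<ge> 1" "L \<le> s^2" "ff L = y"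
    using IVT'[of ff 1 y "s^2"] lo up by auto
  then show ?thesis by blast
qed

definition Lf :: "real \<Rightarrow> real" where "Lf y = (THE L. 1 \<le> L \<and> ff L = y)"

lemma Lf: assumes "y \<ge> 0" shows "1 \<le> Lf y" "ff (Lf y) = y"
proof -
  obtain L where L: "L \<ge> 1" "ff L = y" using ff_exists[OF assms] by blast
  have "Lf y = L" unfolding Lf_def
    by (rule the_equality) (use L ff_inj in auto)
  then show "1 \<le> Lf y" "ff (Lf y) = y" using L by auto
qed

lemma Lf_eq: "1 \<le> L \<Longrightarrow> Lf (ff L) = L"
  using Lf[of "ff L"] ff_nonneg[of L] ff_inj[of L "Lf (ff L)"] by auto

definition phi :: "real \<Rightarrow> real" where "phi y = ff (1 / Lf y)"

lemma phi_nonneg: "y \<ge> 0 \<Longrightarrow> phi y \<ge> 0"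
  unfolding phi_def using Lf[of y] by (intro ff_nonneg) auto

lemma ff_inv_le: assumes "1 \<le> x" shows "ff (1/x) \<le> ff x"
proof -
  have "(\<lambda>x. x - 1/x - 2 * ln x) 1 \<le> (\<lambda>x. x - 1/x - 2 * ln x) x"
  proof (rule DERIV_nonneg_imp_increasing_open[OF assms])
    fix t :: real assume t: "1 < t" "t < x"
    show "\<exists>y. ((\<lambda>x. x - 1/x - 2 * ln x) has_real_derivative y) (at t) \<and> 0 \<le> y"
    proof (intro exI conjI)
      show "((\<lambda>x. x - 1/x - 2 * ln x) has_real_derivative (1 - 1/t)^2) (at t)"
        using t by (auto intro!: derivative_eq_intros simp: field_simps power2_eq_square)
    qed simp
  next
    show "continuous_on {1..x} (\<lambda>x. x - 1/x - 2 * ln x)" by (intro continuous_intros) auto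
  qed
  then show ?thesis using assms ff_inv[of x] by (simp add: ff_def)
qed

lemma phi_le: "y \<ge> 0 \<Longrightarrow> phi y \<le> y"
  unfolding phi_def using Lf[of y] ff_inv_le[of "Lf y"] by auto

lemma ff_inv_mono: assumes "1 \<le> x" "x \<le> y" shows "ff (1/x) \<le> ff (1/y)"
proof -
  have "ln (x/y) \<le> x/y - 1" using assms by (intro ln_le_minus_one) auto
  then have "ln y - ln x \<ge> 1 - x / y" using assms by (simp add: ln_div)
  moreover have "1 - x/y \<ge> 1/x - 1/y"
  proof -
    have "1/x - 1/y = (y - x) / (x*y)" using assms by (simp add: field_simps)
    also have "\<dots> \<le> (y - x) / y" using assms by (intro divide_left_mono) (auto simp: mult_le_cancel_right1)
    also have "\<dots> = 1 - x/y" using assms by (simp add: field_simps)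
    finally show ?thesis .
  qed
  ultimately show ?thesis using assms ff_inv[of x] ff_inv[of y] by simp
qed

lemma phi_mono: assumes "0 \<le> y" "y \<le> Y" shows "phi y \<le> phi Y"
proof -
  have "Lf y \<le> Lf Y" using Lf[of y] Lf[of Y] assms ff_mono_iff[of "Lf y" "Lf Y"] by auto
  then show ?thesis unfolding phi_def using Lf[of y] assms by (intro ff_inv_mono) auto
qed

lemma tangent: assumes "1 \<le> lam" "lam \<le> l"
  shows "ff (1/l) \<le> ff (1/lam) + (ff l - ff lam) / lam"
proof -
  define h where "h = (\<lambda>l. (l - ln l)/lam - 1/l - ln l)"
  have "h lam \<le> h l"
  proof (rule DERIV_nonneg_imp_increasing_open[OF assms(2)])
    fix t :: real assume t: "lam < t" "t < l"
    have "0 \<le> (t - 1) / t * (1/lam - 1/t)" using t assms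
      by (intro mult_nonneg_nonneg) (auto simp: field_simps)
    also have "(t - 1) / t * (1/lam - 1/t) = (1 - 1/t) / lam - (- 1/t^2) - 1/t"
      using t assms by (simp add: field_simps power2_eq_square)
    finally have 1: "0 \<le> (1 - 1/t) / lam - (- 1/t^2) - 1/t" .
    have "(h has_real_derivative (1 - 1/t) / lam - (- 1/t^2) - 1/t) (at t)"
      unfolding h_def using t assms
      by (intro derivative_eq_intros refl) (auto simp: power2_eq_square)
    with 1 show "\<exists>y. (h has_real_derivative y) (at t) \<and> 0 \<le> y" by blast
  next
    show "continuous_on {lam..l} h" unfolding h_def using assms by (intro continuous_intros) auto
  qed
  then have H: "(lam - ln lam)/lam - 1/lam - ln lam \<le> (l - ln l)/lam - 1/l - ln l" unfolding h_def .
  have E: "(l - ln l)/lam - (lam - ln lam)/lam = (ff l - ff lam)/lam"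
    using assms by (simp add: ff_def field_simps)
  have "lam / lam = 1" using assms by simp
  then show ?thesis using H E assms ff_inv[of l] ff_inv[of lam]
    by (simp add: diff_divide_distrib)
qed

lemma chord_aux: assumes "1 \<le> l" shows "ff l \<le> l * ff (1/l)"
proof -
  have "(\<lambda>x. (x+1) * ln x - 2*(x-1)) 1 \<le> (\<lambda>x. (x+1) * ln x - 2*(x-1)) l"
  proof (rule DERIV_nonneg_imp_increasing_open[OF assms])
    fix t :: real assume t: "1 < t" "t < l"
    have "ln (1/t) \<le> 1/t - 1" using t by (intro ln_le_minus_one) auto
    then have "0 \<le> ln t + 1/t - 1" using t by (simp add: ln_div)
    moreover have "((\<lambda>x. (x+1) * ln x - 2*(x-1)) has_real_derivative ln t + 1/t - 1) (at t)"
      using t by (auto intro!: derivative_eq_intros simp: field_simps)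
    ultimately show "\<exists>y. ((\<lambda>x. (x+1) * ln x - 2*(x-1)) has_real_derivative y) (at t) \<and> 0 \<le> y" by blast
  next
    show "continuous_on {1..l} (\<lambda>x. (x+1) * ln x - 2*(x-1))" by (intro continuous_intros) auto
  qed
  then have k: "2 * (l - 1) \<le> (l + 1) * ln l" by simp
  have "l * ff (1/l) = 1 + l * ln l - l" using assms by (simp add: ff_inv field_simps)
  then show ?thesis using k by (simp add: ff_def algebra_simps)
qed

lemma key1: assumes "lam > 0" "a \<ge> 0"
  shows "phi (ff lam + a) \<le> ff (1/lam) + a / lam"
proof (cases "lam \<ge> 1")
  case True
  define y where "y = ff lam + a"
  have y0: "y \<ge> 0" unfolding y_def using ff_nonneg[of lam] assms by simp
  have "lam \<le> Lf y" using Lf[OF y0] True ff_mono_iff[of lam "Lf y"] assms unfolding y_def by auto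
  from tangent[OF True this] have "ff (1 / Lf y) \<le> ff (1/lam) + (ff (Lf y) - ff lam) / lam" .
  then show ?thesis unfolding phi_def y_def[symmetric] using Lf[OF y0] unfolding y_def by simp
next
  case False
  have "ff lam \<le> ff (1/lam)" using ff_inv_le[of "1/lam"] False assms by (simp add: field_simps)
  moreover have "a \<le> a / lam"
  proof -
    have "a * lam \<le> a * 1" using False assms by (intro mult_left_mono) auto
    then show ?thesis using assms by (simp add: field_simps)
  qed
  moreover have "phi (ff lam + a) \<le> ff lam + a" using ff_nonneg[of lam] assms by (intro phi_le) simp
  ultimately show ?thesis by linarith
qed

lemma chord: assumes "0 \<le> y" "y \<le> Y" shows "y * phi Y \<le> Y * phi y"
proof (cases "y = 0")
  case True then show ?thesis using phi_nonneg[of 0] assms by simp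
next
  case False
  define l where "l = Lf y"
  have l: "1 \<le> l" "ff l = y" using Lf[OF assms(1)] unfolding l_def by auto
  have "phi Y \<le> ff (1/l) + (Y - y) / l"
    using key1[of l "Y - y"] l assms by simp
  also have "ff (1/l) = phi y" unfolding phi_def l_def ..
  finally have 1: "phi Y \<le> phi y + (Y - y) / l" .
  have 2: "y / l \<le> phi y" using chord_aux[OF l(1)] l unfolding phi_def l_def[symmetric] by (simp add: field_simps)
  have "y * phi Y \<le> y * phi y + (Y - y) * (y / l)" using mult_left_mono[OF 1, of y] assms by (simp add: algebra_simps)
  also have "\<dots> \<le> y * phi y + (Y - y) * phi y" using mult_left_mono[OF 2, of "Y - y"] assms by simp
  finally show ?thesis by (simp add: algebra_simps)
qed

lemma sum_bound:
  assumes "finite I" "\<And>i. i \<in> I \<Longrightarrow> y i \<ge> 0" "\<And>i. i \<in> I \<Longrightarrow> c i \<ge> phi (y i)"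
    and "sum y I \<ge> Y" "Y > 0"
  shows "sum c I \<ge> phi Y"
proof (cases "\<exists>j\<in>I. y j \<ge> Y")
  case True
  then obtain j where j: "j \<in> I" "y j \<ge> Y" by auto
  have "phi Y \<le> c j" using phi_mono[of Y "y j"] assms j by force
  also have "c j \<le> sum c I"
  proof (rule member_le_sum[OF j(1) _ assms(1)])
    fix i assume "i \<in> I - {j}"
    then have "i \<in> I" by simp
    then show "0 \<le> c i" using assms(2,3)[of i] phi_nonneg[of "y i"] by linarith
  qed
  finally show ?thesis .
next
  case False
  have "\<And>i. i \<in> I \<Longrightarrow> y i * (phi Y / Y) \<le> c i"
  proof -
    fix i assume i: "i \<in> I"
    have "y i * phi Y \<le> Y * phi (y i)" using chord[of "y i" Y] False assms i by force
    then have "y i * (phi Y / Y) \<le> phi (y i)" using assms by (simp add: field_simps)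
    then show "y i * (phi Y / Y) \<le> c i" using assms(3)[OF i] by linarith
  qed
  then have "(\<Sum>i\<in>I. y i * (phi Y / Y)) \<le> sum c I" by (rule sum_mono)
  then have "sum y I * (phi Y / Y) \<le> sum c I" by (simp only: sum_distrib_right)
  moreover have "Y * (phi Y / Y) \<le> sum y I * (phi Y / Y)"
    using assms phi_nonneg[of Y] by (intro mult_right_mono) auto
  ultimately show ?thesis using assms by simp
qed

lemma lambert_eq: assumes "M > 0"
  shows "lambert_W_m1 (- exp (- (1 + 2*M))) = - Lf (2*M)"
proof -
  define L where "L = Lf (2*M)"
  have L: "1 \<le> L" "ff L = 2*M" using Lf[of "2*M"] assms unfolding L_def by auto
  have eq: "w \<le> -1 \<and> w * exp w = - exp (- (1 + 2*M)) \<longleftrightarrow> w = -L" for w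
  proof
    assume w: "w \<le> -1 \<and> w * exp w = - exp (- (1 + 2*M))"
    then have "(-w) * exp w = exp (- (1 + 2*M))" by simp
    then have "ln ((-w) * exp w) = - (1 + 2*M)" by simp
    moreover have "ln ((-w) * exp w) = ln (-w) + ln (exp w)" using w ln_mult[of "-w" "exp w"] by simp
    ultimately have "ln (-w) + w = - (1 + 2*M)" by simp
    then have "ff (-w) = 2*M" by (simp add: ff_def)
    then show "w = -L" using ff_inj[of "-w" L] L w by auto
  next
    assume "w = -L"
    moreover have "L * exp (- L) = exp (- (1 + 2*M))"
    proof -
      have "L * exp (- L) = exp (ln L - L)" using L by (simp add: exp_diff exp_minus field_simps)
      also have "ln L - L = - (1 + 2*M)" using L by (simp add: ff_def)
      finally show ?thesis .
    qed
    ultimately show "w \<le> -1 \<and> w * exp w = - exp (- (1 + 2*M))" using L by simp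
  qed
  show ?thesis unfolding lambert_W_m1_def L_def[symmetric] using eq by simp
qed

lemma final_real:
  assumes "M > 0" "finite I" "\<And>i. i \<in> I \<Longrightarrow> lam i > 0"
    and "(1/2) * (\<Sum>i\<in>I. ff (lam i) + (e i)^2) \<ge> M"
  shows "(1/2) * (\<Sum>i\<in>I. ff (1 / lam i) + (e i)^2 / lam i) \<ge>
    (1/2) * (1 / (- lambert_W_m1 (- exp (- (1 + 2*M))))
             - ln (1 / (- lambert_W_m1 (- exp (- (1 + 2*M))))) - 1)"
proof -
  have "phi (2*M) \<le> (\<Sum>i\<in>I. ff (1 / lam i) + (e i)^2 / lam i)"
  proof (rule sum_bound[where y = "\<lambda>i. ff (lam i) + (e i)^2"])
    fix i assume i: "i \<in> I"
    show "0 \<le> ff (lam i) + (e i)^2" using ff_nonneg[of "lam i"] assms(3)[OF i] by simp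
    show "phi (ff (lam i) + (e i)^2) \<le> ff (1 / lam i) + (e i)^2 / lam i"
      using key1[of "lam i" "(e i)^2"] assms(3)[OF i] by simp
  qed (use assms in auto)
  moreover have "phi (2*M) = 1 / (- lambert_W_m1 (- exp (- (1 + 2*M))))
             - ln (1 / (- lambert_W_m1 (- exp (- (1 + 2*M))))) - 1"
    unfolding lambert_eq[OF assms(1)] phi_def ff_def by simp
  ultimately show ?thesis by simp
qed



lemma inner_mat: "x \<bullet> (A *v y) = (transpose A *v x) \<bullet> (y::real^'n)"
  by (simp add: transpose_matrix_vector dot_lmul_matrix)

lemma sym_inner: assumes "transpose A = A" shows "x \<bullet> (A *v y) = y \<bullet> (A *v (x::real^'n))"
proof -
  have "x \<bullet> (A *v y) = (A *v x) \<bullet> y" using inner_mat[of x A y] assms by simp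
  also have "\<dots> = y \<bullet> (A *v x)" by (rule inner_commute)
  finally show ?thesis .
qed

lemma inv_props: assumes "invertible (A::real^'n^'n)"
  shows "A ** matrix_inv A = mat 1" "matrix_inv A ** A = mat 1"
proof -
  have "\<exists>A'. A ** A' = mat 1 \<and> A' ** A = mat 1" using assms unfolding invertible_def .
  from someI_ex[OF this] show "A ** matrix_inv A = mat 1" "matrix_inv A ** A = mat 1"
    unfolding matrix_inv_def by auto
qed

lemma inv_vec: assumes "invertible (A::real^'n^'n)"
  shows "A *v (matrix_inv A *v x) = x" "matrix_inv A *v (A *v x) = x"
  using inv_props[OF assms] by (simp_all add: matrix_vector_mul_assoc)

lemma pd_invertible: assumes "pos_def_matrix (S::real^'n^'n)" shows "invertible S"
proof -
  have "\<forall>x. S *v x = 0 \<longrightarrow> x = 0"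
  proof (intro allI impI)
    fix x assume Sx: "S *v x = 0"
    show "x = 0"
    proof (rule ccontr)
      assume "x \<noteq> 0"
      then have "0 < x \<bullet> (S *v x)" using assms by (simp add: pos_def_matrix_def)
      with Sx show False by simp
    qed
  qed
  then have "\<exists>B. B ** S = mat 1" by (simp only: matrix_left_invertible_ker)
  then show ?thesis by (simp only: invertible_left_inverse)
qed

lemma pd_inv: assumes "pos_def_matrix (S::real^'n^'n)" shows "pos_def_matrix (matrix_inv S)"
proof -
  define A where "A = matrix_inv S"
  have inv: "invertible S" by (rule pd_invertible[OF assms])
  have SA: "S ** A = mat 1" "A ** S = mat 1" using inv_props[OF inv] unfolding A_def by auto
  have sym: "transpose S = S" using assms unfolding pos_def_matrix_def by simp
  have "transpose A ** S = mat 1"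
    using arg_cong[OF SA(1), of transpose] sym by (simp add: matrix_transpose_mul transpose_mat)
  then have "transpose A = A"
  proof -
    assume TS: "transpose A ** S = mat 1"
    have "transpose A = transpose A ** (S ** A)" using SA by (simp add: matrix_mul_rid)
    also have "\<dots> = (transpose A ** S) ** A" by (simp add: matrix_mul_assoc)
    also have "\<dots> = A" using TS by (simp add: matrix_mul_lid)
    finally show ?thesis .
  qed
  moreover have "x \<bullet> (A *v x) > 0" if "x \<noteq> 0" for x
  proof -
    define y where "y = A *v x"
    have x: "x = S *v y" unfolding y_def using SA by (simp add: matrix_vector_mul_assoc)
    then have "y \<noteq> 0" using that by auto
    then have "y \<bullet> (S *v y) > 0" using assms unfolding pos_def_matrix_def by auto
    then show ?thesis unfolding y_def[symmetric] using x by (simp add: inner_commute)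
  qed
  ultimately show ?thesis unfolding pos_def_matrix_def A_def by auto
qed

lemma quad_zero: assumes "\<And>t::real. 0 \<le> 2 * t * b + t^2 * q" "q \<ge> 0" shows "b = 0"
proof -
  define t where "t = - b / (q + 1)"
  have tq: "t * (q + 1) = - b" unfolding t_def using assms(2) by simp
  have "(q + 1)^2 * (2 * t * b + t^2 * q) = 2 * b * (t * (q + 1)) * (q + 1) + (t * (q + 1))^2 * q"
    by (simp add: algebra_simps power2_eq_square)
  also have "\<dots> = - (b^2 * (q + 2))" unfolding tq by (simp add: algebra_simps power2_eq_square)
  finally have "(q + 1)^2 * (2 * t * b + t^2 * q) = - (b^2 * (q + 2))" .
  moreover have "(q + 1)^2 * (2 * t * b + t^2 * q) \<ge> 0" using assms by simp
  ultimately have "b^2 * (q + 2) \<le> 0" by linarith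
  moreover have "q + 2 > 0" using assms by simp
  ultimately have "b^2 \<le> 0" by (simp add: mult_le_0_iff)
  then show ?thesis by simp
qed

lemma spectral_step:
  fixes G B :: "real^'n^'n" and F :: "'n set" and v :: "'n \<Rightarrow> real^'n"
  assumes G: "pos_def_matrix G" and B: "transpose B = B" and a: "a \<notin> F"
    and orth: "\<And>i j. i \<in> F \<Longrightarrow> j \<in> F \<Longrightarrow> v i \<bullet> (G *v v j) = (if i = j then 1 else 0)"
    and eig: "\<And>i. i \<in> F \<Longrightarrow> B *v v i = \<mu> i *\<^sub>R (G *v v i)"
  shows "\<exists>u \<nu>. (\<forall>i\<in>F. v i \<bullet> (G *v u) = 0) \<and> u \<bullet> (G *v u) = 1 \<and> B *v u = \<nu> *\<^sub>R (G *v u)"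
proof -
  have Gs: "transpose G = G" using G unfolding pos_def_matrix_def by simp
  have Gp: "\<And>x. x \<noteq> 0 \<Longrightarrow> x \<bullet> (G *v x) > 0" using G unfolding pos_def_matrix_def by simp
  define W where "W = {x. \<forall>i\<in>F. v i \<bullet> (G *v x) = 0}"
  have W_sub: "x + y \<in> W" "c *\<^sub>R x \<in> W" if "x \<in> W" "y \<in> W" for x y c
    using that unfolding W_def by (auto simp: matrix_vector_right_distrib matrix_vector_mult_scaleR
       inner_add_right)
  have W0: "0 \<in> W" unfolding W_def by simp
  have fin: "finite F" by simp
  have dimlt: "dim ((\<lambda>i. G *v v i) ` F) < DIM(real^'n)"
  proof -
    have "dim ((\<lambda>i. G *v v i) ` F) \<le> card ((\<lambda>i. G *v v i) ` F)" by (rule dim_le_card') simp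
    also have "\<dots> \<le> card F" by (rule card_image_le) simp
    also have "\<dots> < card (UNIV :: 'n set)" using a by (intro psubset_card_mono) auto
    finally show ?thesis by simp
  qed
  obtain w where w: "w \<noteq> 0" "\<And>y. y \<in> span ((\<lambda>i. G *v v i) ` F) \<Longrightarrow> orthogonal w y"
    using orthogonal_to_subspace_exists[OF dimlt] by blast
  have wW: "w \<in> W" unfolding W_def
  proof safe
    fix i assume "i \<in> F"
    then have "orthogonal w (G *v v i)" using w by (intro w(2) span_base) auto
    then show "v i \<bullet> (G *v w) = 0" using sym_inner[OF Gs, of "v i" w] by (simp add: orthogonal_def)
  qed
  \<comment> \<open>maximise the Rayleigh quotient\<close>
  define K where "K = W \<inter> sphere 0 1"
  define R where "R = (\<lambda>x. (x \<bullet> (B *v x)) / (x \<bullet> (G *v x)))"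
  have "W = (\<Inter>i\<in>F. {x. v i \<bullet> (G *v x) = 0})" unfolding W_def by auto
  moreover have "closed {x. v i \<bullet> (G *v x) = 0}" for i
    by (intro closed_Collect_eq continuous_on_inner continuous_on_const matrix_vector_mult_linear_continuous_on)
  ultimately have "closed W" by auto
  then have cK: "compact K" unfolding K_def by (intro closed_Int_compact) auto
  have "w /\<^sub>R norm w \<in> K" unfolding K_def using w wW W_sub by auto
  then have neK: "K \<noteq> {}" by auto
  have "continuous_on K R" unfolding R_def
    apply (intro continuous_intros)
    apply (auto simp: K_def)
    subgoal for x using Gp[of x] by (cases "x = 0") auto
    done
  from continuous_attains_sup[OF cK neK this] obtain v0 where v0: "v0 \<in> K" "\<And>y. y \<in> K \<Longrightarrow> R y \<le> R v0"
    by blast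
  define \<nu> where "\<nu> = R v0"
  have v0W: "v0 \<in> W" and v00: "v0 \<noteq> 0" using v0 unfolding K_def by auto
  have Gv0: "v0 \<bullet> (G *v v0) > 0" using Gp v00 by auto
  define Q where "Q = (\<lambda>x. \<nu> * (x \<bullet> (G *v x)) - x \<bullet> (B *v x))"
  have Qnn: "Q x \<ge> 0" if "x \<in> W" for x
  proof (cases "x = 0")
    case True then show ?thesis unfolding Q_def by simp
  next
    case False
    define y where "y = x /\<^sub>R norm x"
    have "y \<in> K" unfolding K_def y_def using False that W_sub by auto
    then have "R y \<le> \<nu>" using v0 unfolding \<nu>_def by auto
    moreover have "R y = R x" unfolding R_def y_def using False
      by (simp add: matrix_vector_mult_scaleR field_simps)
    moreover have "x \<bullet> (G *v x) > 0" using Gp False by auto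
    ultimately show ?thesis unfolding Q_def R_def by (simp add: field_simps)
  qed
  have Qv0: "Q v0 = 0" unfolding Q_def \<nu>_def R_def using Gv0 by simp
  define y where "y = \<nu> *\<^sub>R (G *v v0) - B *v v0"
  have yorth: "x \<bullet> y = 0" if "x \<in> W" for x
  proof -
    have "0 \<le> 2 * t * (x \<bullet> y) + t^2 * Q x" for t
    proof -
      have "v0 + t *\<^sub>R x \<in> W" using W_sub v0W that by auto
      then have "0 \<le> Q (v0 + t *\<^sub>R x)" by (rule Qnn)
      also have "Q (v0 + t *\<^sub>R x) = Q v0 + 2 * t * (x \<bullet> y) + t^2 * Q x"
        unfolding Q_def y_def using sym_inner[OF Gs, of x v0] sym_inner[OF B, of x v0]
        by (simp add: matrix_vector_right_distrib matrix_vector_mult_scaleR inner_add_left inner_add_right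
             inner_diff_right algebra_simps power2_eq_square inner_commute)
      finally show ?thesis using Qv0 by simp
    qed
    then show ?thesis using quad_zero Qnn[OF that] by blast
  qed
  have invG: "invertible G" by (rule pd_invertible[OF G])
  define z where "z = matrix_inv G *v y"
  have Gz: "G *v z = y" unfolding z_def using inv_vec[OF invG] by simp
  have zW: "z \<in> W" unfolding W_def
  proof safe
    fix i assume i: "i \<in> F"
    have "v i \<bullet> (B *v v0) = v0 \<bullet> (B *v v i)" by (rule sym_inner[OF B])
    also have "\<dots> = \<mu> i * (v0 \<bullet> (G *v v i))" using eig[OF i] by simp
    also have "v0 \<bullet> (G *v v i) = v i \<bullet> (G *v v0)" by (rule sym_inner[OF Gs])
    also have "\<dots> = 0" using v0W i unfolding W_def by auto
    finally have "v i \<bullet> (B *v v0) = 0" by simp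
    moreover have "v i \<bullet> (G *v v0) = 0" using v0W i unfolding W_def by auto
    ultimately show "v i \<bullet> (G *v z) = 0" unfolding Gz y_def by (simp add: inner_diff_right)
  qed
  have "z \<bullet> (G *v z) = 0" using yorth[OF zW] Gz by simp
  then have "z = 0" using Gp[of z] by (cases "z = 0") auto
  then have y0: "y = 0" using Gz by simp
  define u where "u = v0 /\<^sub>R sqrt (v0 \<bullet> (G *v v0))"
  have "\<forall>i\<in>F. v i \<bullet> (G *v u) = 0"
    using v0W unfolding W_def u_def by (simp add: matrix_vector_mult_scaleR)
  moreover have "u \<bullet> (G *v u) = 1"
  proof -
    have s: "sqrt (v0 \<bullet> (G *v v0)) * sqrt (v0 \<bullet> (G *v v0)) = v0 \<bullet> (G *v v0)" using Gv0 by simp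
    have "sqrt (v0 \<bullet> (G *v v0)) > 0" using Gv0 by simp
    then show ?thesis unfolding u_def using s
      by (simp add: matrix_vector_mult_scaleR field_simps)
  qed
  moreover have "B *v u = \<nu> *\<^sub>R (G *v u)"
  proof -
    have e: "B *v v0 = \<nu> *\<^sub>R (G *v v0)" using y0 unfolding y_def by simp
    show ?thesis unfolding u_def by (simp add: matrix_vector_mult_scaleR e)
  qed
  ultimately show ?thesis by blast
qed

lemma quad_entry: "(transpose V ** A ** V) $ i $ j = column i V \<bullet> (A *v column j (V::real^'n^'n))"
proof -
  have "(transpose V ** A ** V) $ i $ j = (\<Sum>k\<in>UNIV. (\<Sum>l\<in>UNIV. V$l$i * A$l$k) * V$k$j)"
    by (simp add: matrix_matrix_mult_def transpose_def)
  also have "\<dots> = (\<Sum>k\<in>UNIV. \<Sum>l\<in>UNIV. V$l$i * A$l$k * V$k$j)" by (simp add: sum_distrib_right)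
  also have "\<dots> = (\<Sum>l\<in>UNIV. \<Sum>k\<in>UNIV. V$l$i * A$l$k * V$k$j)" by (rule sum.swap)
  also have "\<dots> = (\<Sum>l\<in>UNIV. V$l$i * (\<Sum>k\<in>UNIV. A$l$k * V$k$j))" by (simp add: sum_distrib_left mult.assoc)
  also have "\<dots> = column i V \<bullet> (A *v column j V)"
    by (simp add: inner_vec_def matrix_vector_mult_def column_def)
  finally show ?thesis .
qed

lemma gen_spectral_vec:
  fixes G B :: "real^'n^'n"
  assumes G: "pos_def_matrix G" and B: "transpose B = B"
  shows "\<exists>(v::'n \<Rightarrow> real^'n) \<mu>. (\<forall>i j. v i \<bullet> (G *v v j) = (if i = j then 1 else 0)) \<and> (\<forall>i. B *v v i = \<mu> i *\<^sub>R (G *v v i))"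
proof -
  have Gs: "transpose G = G" using G unfolding pos_def_matrix_def by simp
  have "finite F \<Longrightarrow> \<exists>v \<mu>. (\<forall>i\<in>F. \<forall>j\<in>F. v i \<bullet> (G *v v j) = (if i = j then 1 else 0)) \<and>
        (\<forall>i\<in>F. B *v v i = \<mu> i *\<^sub>R (G *v v i))" for F :: "'n set"
  proof (induction F rule: finite_induct)
    case empty then show ?case by simp
  next
    case (insert a F)
    then obtain v \<mu> where o: "\<forall>i\<in>F. \<forall>j\<in>F. v i \<bullet> (G *v v j) = (if i = j then 1 else 0)"
      and e: "\<forall>i\<in>F. B *v v i = \<mu> i *\<^sub>R (G *v v i)" by blast
    obtain u \<nu> where u: "\<forall>i\<in>F. v i \<bullet> (G *v u) = 0" "u \<bullet> (G *v u) = 1" "B *v u = \<nu> *\<^sub>R (G *v u)"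
      using spectral_step[OF G B insert(2), of v \<mu>] o e by blast
    define v' where "v' = v(a := u)"
    define \<mu>' where "\<mu>' = \<mu>(a := \<nu>)"
    have "\<forall>i\<in>insert a F. \<forall>j\<in>insert a F. v' i \<bullet> (G *v v' j) = (if i = j then 1 else 0)"
    proof (intro ballI)
      fix i j assume i: "i \<in> insert a F" and j: "j \<in> insert a F"
      show "v' i \<bullet> (G *v v' j) = (if i = j then 1 else 0)"
      proof (cases "i = a")
        case True
        show ?thesis
        proof (cases "j = a")
          case True with \<open>i = a\<close> show ?thesis using u unfolding v'_def by simp
        next
          case False
          then have jF: "j \<in> F" using j by simp
          have "u \<bullet> (G *v v j) = v j \<bullet> (G *v u)" by (rule sym_inner[OF Gs])
          then show ?thesis using False \<open>i = a\<close> u(1) jF unfolding v'_def by simp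
        qed
      next
        case False
        then have iF: "i \<in> F" using i by simp
        show ?thesis
        proof (cases "j = a")
          case True then show ?thesis using False u(1) iF unfolding v'_def by simp
        next
          case False
          then have jF: "j \<in> F" using j by simp
          have "i \<noteq> a" "j \<noteq> a" using \<open>i \<noteq> a\<close> False by auto
          then show ?thesis using o iF jF unfolding v'_def by simp
        qed
      qed
    qed
    moreover have "\<forall>i\<in>insert a F. B *v v' i = \<mu>' i *\<^sub>R (G *v v' i)"
      using e u(3) insert(2) unfolding v'_def \<mu>'_def by auto
    ultimately show ?case by blast
  qed
  from this[of UNIV, OF finite_class.finite_UNIV] show ?thesis unfolding ball_UNIV by blast
qed

definition diagm :: "('n \<Rightarrow> real) \<Rightarrow> real^'n^'n" where
  "diagm \<mu> = (\<chi> i j. if i = j then \<mu> i else 0)"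

lemma simult_diag:
  fixes G B :: "real^'n^'n"
  assumes G: "pos_def_matrix G" and B: "pos_def_matrix B"
  shows "\<exists>V (\<mu>::'n \<Rightarrow> real). transpose V ** G ** V = mat 1 \<and> transpose V ** B ** V = diagm \<mu> \<and> (\<forall>i. \<mu> i > 0)"
proof -
  have Bs: "transpose B = B" using B unfolding pos_def_matrix_def by simp
  obtain v :: "'n \<Rightarrow> real^'n" and \<mu> where o: "\<And>i j. v i \<bullet> (G *v v j) = (if i = j then 1 else 0)"
    and e: "\<And>i. B *v v i = \<mu> i *\<^sub>R (G *v v i)"
    using gen_spectral_vec[OF G Bs] by blast
  define V :: "real^'n^'n" where "V = (\<chi> r c. v c $ r)"
  have col: "column j V = v j" for j unfolding V_def column_def by (simp add: vec_eq_iff)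
  have "transpose V ** G ** V = mat 1"
    by (simp add: vec_eq_iff quad_entry col o mat_def)
  moreover have "transpose V ** B ** V = diagm \<mu>"
    by (simp add: vec_eq_iff quad_entry col e o diagm_def matrix_vector_mult_scaleR)
  moreover have "\<mu> i > 0" for i
  proof -
    have "v i \<noteq> 0" using o[of i i] by auto
    then have "0 < v i \<bullet> (B *v v i)" using B unfolding pos_def_matrix_def by simp
    also have "\<dots> = \<mu> i" using e[of i] o[of i i] by (simp add: matrix_vector_mult_scaleR)
    finally show ?thesis .
  qed
  ultimately show ?thesis by blast
qed



lemma Basis_cart: "(Basis :: (real^'n) set) = range (\<lambda>i. axis i 1)"
  unfolding Basis_vec_def by auto

lemma prod_Basis_cart: "(\<Prod>b\<in>(Basis :: (real^'n) set). f b) = (\<Prod>i\<in>UNIV. f (axis i 1))"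
proof -
  have "inj (\<lambda>i::'n. axis i (1::real))" by (auto simp: inj_def axis_eq_axis)
  then show ?thesis unfolding Basis_cart by (simp add: prod.reindex)
qed

lemma measurable_vec_lambda[measurable]:
  "(\<lambda>f. vec_lambda f :: real^'n) \<in> borel_measurable (Pi\<^sub>M UNIV (\<lambda>_::'n. lborel))"
proof (subst borel_measurable_euclidean_space, intro ballI)
  fix b :: "real^'n" assume "b \<in> Basis"
  then obtain i where b: "b = axis i 1" unfolding Basis_cart by auto
  have "(\<lambda>f. vec_lambda f \<bullet> b) = (\<lambda>f. f i)" unfolding b by (simp add: inner_axis)
  moreover have "(\<lambda>f. f i) \<in> borel_measurable (Pi\<^sub>M UNIV (\<lambda>_::'n. lborel))"
    using measurable_component_singleton[of i UNIV "\<lambda>_. lborel"] by (simp add: measurable_lborel1)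
  ultimately show "(\<lambda>f. vec_lambda f \<bullet> b) \<in> borel_measurable (Pi\<^sub>M UNIV (\<lambda>_::'n. lborel))" by simp
qed

lemma lborel_vec: "(lborel :: (real^'n) measure) = distr (Pi\<^sub>M UNIV (\<lambda>_::'n. lborel)) borel vec_lambda"
proof (rule lborel_eqI)
  fix l u :: "real^'n" assume le: "\<And>b. b \<in> Basis \<Longrightarrow> l \<bullet> b \<le> u \<bullet> b"
  interpret finite_product_sigma_finite "\<lambda>_::'n. lborel" UNIV by standard simp
  have pre: "vec_lambda -` box l u \<inter> space (Pi\<^sub>M UNIV (\<lambda>_::'n. lborel)) = Pi\<^sub>E UNIV (\<lambda>i. {l$i<..<u$i})"
    by (auto simp: mem_box_cart space_PiM PiE_def extensional_def Pi_def)
  have "emeasure (distr (Pi\<^sub>M UNIV (\<lambda>_::'n. lborel)) borel vec_lambda) (box l u) =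
        emeasure (Pi\<^sub>M UNIV (\<lambda>_::'n. lborel)) (Pi\<^sub>E UNIV (\<lambda>i. {l$i<..<u$i}))"
    by (subst emeasure_distr) (auto simp: pre)
  also have "\<dots> = (\<Prod>i\<in>UNIV. emeasure lborel {l$i<..<u$i})"
    by (rule measure_times) auto
  also have "\<dots> = (\<Prod>i\<in>UNIV. ennreal (u$i - l$i))"
    using le[of "axis _ 1"] by (intro prod.cong) (auto simp: inner_axis Basis_cart)
  also have "\<dots> = ennreal (\<Prod>i\<in>UNIV. (u$i - l$i))"
    using le[of "axis _ 1"] by (intro prod_ennreal) (auto simp: inner_axis Basis_cart)
  also have "(\<Prod>i\<in>UNIV. (u$i - l$i)) = (\<Prod>b\<in>Basis. (u - l) \<bullet> b)"
    unfolding prod_Basis_cart by (simp add: inner_axis)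
  finally show "emeasure (distr (Pi\<^sub>M UNIV (\<lambda>_::'n. lborel)) borel vec_lambda) (box l u) = (\<Prod>b\<in>Basis. (u - l) \<bullet> b)" .
qed simp


lemma gauss_1d: assumes "\<sigma> > 0"
  shows "has_bochner_integral lborel (\<lambda>x. normal_density 0 \<sigma> x * (a * x^2 + b * x + c)) (a * \<sigma>^2 + c)"
proof -
  have m2: "has_bochner_integral lborel (\<lambda>x. normal_density 0 \<sigma> x * x^2) (\<sigma>^2)"
    using normal_moment_even[OF assms, of 0 1] assms by (simp add: power2_eq_square field_simps)
  have m1: "has_bochner_integral lborel (\<lambda>x. normal_density 0 \<sigma> x * x) 0"
    using normal_moment_nz_1[OF assms, of 0] .
  have m0: "has_bochner_integral lborel (\<lambda>x. normal_density 0 \<sigma> x) 1"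
    using integrable_normal_density[OF assms, of 0] integral_normal_density[OF assms, of 0]
    by (simp add: has_bochner_integral_iff)
  have "has_bochner_integral lborel
     (\<lambda>x. a * (normal_density 0 \<sigma> x * x^2) + b * (normal_density 0 \<sigma> x * x) + c * normal_density 0 \<sigma> x)
     (a * \<sigma>^2 + b * 0 + c * 1)"
    by (intro has_bochner_integral_add has_bochner_integral_mult_right m0 m1 m2)
  then show ?thesis by (simp add: algebra_simps)
qed

lemma gauss_prod:
  fixes \<sigma> a b c :: "'n::finite \<Rightarrow> real"
  assumes \<sigma>: "\<And>i. \<sigma> i > 0"
  shows "has_bochner_integral lborel
    (\<lambda>w::real^'n. (\<Prod>i\<in>UNIV. normal_density 0 (\<sigma> i) (w$i)) * (\<Sum>i\<in>UNIV. a i * (w$i)^2 + b i * w$i + c i))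
    (\<Sum>i\<in>UNIV. a i * (\<sigma> i)^2 + c i)"
proof -
  interpret finite_product_sigma_finite "\<lambda>_::'n. lborel" UNIV by standard simp
  define q where "q i t = a i * t^2 + b i * t + c i" for i t
  define K where "K j i t = normal_density 0 (\<sigma> i) t * (if i = j then q i t else 1)" for j i t
  have K1: "has_bochner_integral lborel (K j i) (if i = j then a i * (\<sigma> i)^2 + c i else 1)" for j i
  proof (cases "i = j")
    case True then show ?thesis unfolding K_def q_def using gauss_1d[OF \<sigma>[of i]] by simp
  next
    case False then show ?thesis unfolding K_def
      using integrable_normal_density[OF \<sigma>[of i], of 0] integral_normal_density[OF \<sigma>[of i], of 0]
      by (simp add: has_bochner_integral_iff)
  qed
  have Kj: "has_bochner_integral (Pi\<^sub>M UNIV (\<lambda>_::'n. lborel)) (\<lambda>f. \<Prod>i\<in>UNIV. K j i (f i)) (a j * (\<sigma> j)^2 + c j)" for j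
  proof -
    have int: "integrable (Pi\<^sub>M UNIV (\<lambda>_::'n. lborel)) (\<lambda>f. \<Prod>i\<in>UNIV. K j i (f i))"
      by (rule product_integrable_prod) (use K1 in \<open>auto simp: has_bochner_integral_iff\<close>)
    have "(\<integral>f. (\<Prod>i\<in>UNIV. K j i (f i)) \<partial>Pi\<^sub>M UNIV (\<lambda>_::'n. lborel)) = (\<Prod>i\<in>UNIV. integral\<^sup>L lborel (K j i))"
      by (rule product_integral_prod) (use K1 in \<open>auto simp: has_bochner_integral_iff\<close>)
    also have "\<dots> = (\<Prod>i\<in>UNIV. if i = j then a i * (\<sigma> i)^2 + c i else 1)"
      using K1 by (intro prod.cong refl) (simp add: has_bochner_integral_iff)
    also have "\<dots> = a j * (\<sigma> j)^2 + c j" by (simp add: prod.delta)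
    finally show ?thesis using int by (simp add: has_bochner_integral_iff)
  qed
  have "has_bochner_integral (Pi\<^sub>M UNIV (\<lambda>_::'n. lborel)) (\<lambda>f. \<Sum>j\<in>UNIV. \<Prod>i\<in>UNIV. K j i (f i))
          (\<Sum>j\<in>UNIV. a j * (\<sigma> j)^2 + c j)"
    by (rule has_bochner_integral_sum) (use Kj in auto)
  moreover have "(\<Sum>j\<in>UNIV. \<Prod>i\<in>UNIV. K j i (f i)) =
     (\<Prod>i\<in>UNIV. normal_density 0 (\<sigma> i) (vec_lambda f $ i)) * (\<Sum>i\<in>UNIV. a i * (vec_lambda f $ i)^2 + b i * vec_lambda f $ i + c i)" for f
  proof -
    have "(\<Prod>i\<in>UNIV. K j i (f i)) = (\<Prod>i\<in>UNIV. normal_density 0 (\<sigma> i) (f i)) * q j (f j)" for j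
      unfolding K_def by (simp add: prod.distrib prod.delta)
    then show ?thesis by (simp add: sum_distrib_left q_def)
  qed
  ultimately have "has_bochner_integral (Pi\<^sub>M UNIV (\<lambda>_::'n. lborel))
     (\<lambda>f. (\<Prod>i\<in>UNIV. normal_density 0 (\<sigma> i) (vec_lambda f $ i)) * (\<Sum>i\<in>UNIV. a i * (vec_lambda f $ i)^2 + b i * vec_lambda f $ i + c i))
     (\<Sum>j\<in>UNIV. a j * (\<sigma> j)^2 + c j)" by simp
  then have "has_bochner_integral (distr (Pi\<^sub>M UNIV (\<lambda>_::'n. lborel)) borel vec_lambda)
     (\<lambda>w::real^'n. (\<Prod>i\<in>UNIV. normal_density 0 (\<sigma> i) (w$i)) * (\<Sum>i\<in>UNIV. a i * (w$i)^2 + b i * w$i + c i))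
     (\<Sum>j\<in>UNIV. a j * (\<sigma> j)^2 + c j)"
    by (intro has_bochner_integral_distr) auto
  then show ?thesis by (simp add: lborel_vec[symmetric])
qed



lemma my_measure_linear_image:
  fixes f :: "real^'n \<Rightarrow> real^'n"
  assumes "linear f" "S \<in> lmeasurable"
  shows "(f ` S) \<in> lmeasurable \<and> measure lebesgue (f ` S) = \<bar>det (matrix f)\<bar> * measure lebesgue S"
proof -
  let ?Q = "\<lambda>f S. measure lebesgue (f ` S) = \<bar>det (matrix f)\<bar> * measure lebesgue S"
  have "\<forall>S \<in> lmeasurable. (f ` S) \<in> lmeasurable \<and> ?Q f S"
  proof (rule induct_linear_elementary [OF \<open>linear f\<close>]; intro ballI)
    fix f g :: "real^'n \<Rightarrow> real^'n" and S :: "(real,'n) vec set"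
    assume "linear f" and "linear g"
      and f [rule_format]: "\<forall>S \<in> lmeasurable. f ` S \<in> lmeasurable \<and> ?Q f S"
      and g [rule_format]: "\<forall>S \<in> lmeasurable. g ` S \<in> lmeasurable \<and> ?Q g S"
      and S: "S \<in> lmeasurable"
    then have gS: "g ` S \<in> lmeasurable"
      by blast
    show "(f \<circ> g) ` S \<in> lmeasurable \<and> ?Q (f \<circ> g) S"
      using f [OF gS] g [OF S] matrix_compose [OF \<open>linear g\<close> \<open>linear f\<close>]
      by (simp add: o_def image_comp abs_mult det_mul)
  next
    fix f :: "real^'n \<Rightarrow> real^'n" and i and S :: "(real^'n) set"
    assume "linear f" and 0: "\<And>x. f x $ i = 0" and "S \<in> lmeasurable"
    have "\<not> surj f"
    proof
      assume "surj f"
      then obtain x where "f x = axis i 1" by (metis surjE)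
      then show False using 0[of x] by (simp add: axis_def)
    qed
    then have "\<not> inj f"
      using linear_injective_imp_surjective \<open>linear f\<close> by blast
    have detf: "det (matrix f) = 0"
      using \<open>\<not> inj f\<close> det_nz_iff_inj[OF \<open>linear f\<close>] by blast
    show "f ` S \<in> lmeasurable \<and> ?Q f S"
    proof
      show "f ` S \<in> lmeasurable"
        using lmeasurable_iff_indicator_has_integral \<open>linear f\<close> \<open>\<not> inj f\<close> negligible_UNIV negligible_linear_singular_image by blast
      have "measure lebesgue (f ` S) = 0"
        by (meson \<open>\<not> inj f\<close> \<open>linear f\<close> negligible_imp_measure0 negligible_linear_singular_image)
      also have "\<dots> = \<bar>det (matrix f)\<bar> * measure lebesgue S"
        by (simp add: detf)
      finally show "?Q f S" .
    qed
  next
    fix c and S :: "(real^'n) set"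
    assume "S \<in> lmeasurable"
    show "(\<lambda>a. \<chi> i. c i * a $ i) ` S \<in> lmeasurable \<and> ?Q (\<lambda>a. \<chi> i. c i * a $ i) S"
    proof
      show "(\<lambda>a. \<chi> i. c i * a $ i) ` S \<in> lmeasurable"
        by (simp add: \<open>S \<in> lmeasurable\<close> measurable_stretch)
      show "?Q (\<lambda>a. \<chi> i. c i * a $ i) S"
        by (simp add: measure_stretch [OF \<open>S \<in> lmeasurable\<close>, of c] axis_def matrix_def det_diagonal)
    qed
  next
    fix m :: "'n" and n :: "'n" and S :: "(real, 'n) vec set"
    assume "m \<noteq> n" and "S \<in> lmeasurable"
    let ?h = "\<lambda>v::(real, 'n) vec. \<chi> i. v $ Transposition.transpose m n i"
    have lin: "linear ?h"
      by (rule linearI) (simp_all add: plus_vec_def scaleR_vec_def)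
    have meq: "measure lebesgue ((\<lambda>v::(real, 'n) vec. \<chi> i. v $ Transposition.transpose m n i) ` cbox a b)
             = measure lebesgue (cbox a b)" for a b
    proof (cases "cbox a b = {}")
      case True then show ?thesis
        by simp
    next
      case False
      then have him: "?h ` (cbox a b) \<noteq> {}"
        by blast
      have eq: "?h ` (cbox a b) = cbox (?h a) (?h b)"
        by (auto simp: image_iff lambda_swap_Galois mem_box_cart) (metis transpose_involutory)+
      show ?thesis
        using him prod.permute [OF permutes_swap_id, where S=UNIV and g="\<lambda>i. (b - a)$i", symmetric]
        by (simp add: eq content_cbox_cart False)
    qed
    have "(\<chi> i j. if Transposition.transpose m n i = j then 1 else 0) = (\<chi> i j. if j = Transposition.transpose m n i then 1 else (0::real))"
      by (auto intro!: Cart_lambda_cong)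
    then have "matrix ?h = transpose(\<chi> i j. mat 1 $ i $ Transposition.transpose m n j)"
      by (auto simp: matrix_eq transpose_def axis_def mat_def matrix_def)
    then have 1: "\<bar>det (matrix ?h)\<bar> = 1"
      by (simp add: det_permute_columns permutes_swap_id sign_swap_id abs_mult)
    show "?h ` S \<in> lmeasurable \<and> ?Q ?h S"
      using measure_linear_sufficient [OF lin \<open>S \<in> lmeasurable\<close>] meq 1 by force
  next
    fix m n :: "'n" and S :: "(real, 'n) vec set"
    assume "m \<noteq> n" and "S \<in> lmeasurable"
    let ?h = "\<lambda>v::(real, 'n) vec. \<chi> i. if i = m then v $ m + v $ n else v $ i"
    have lin: "linear ?h"
      by (rule linearI) (auto simp: algebra_simps plus_vec_def scaleR_vec_def vec_eq_iff)
    have "matrix ?h = (\<chi> k. if k = m then row m (mat 1) + 1 *s row n (mat 1) else row k (mat 1 :: real^'n^'n))"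
      by (simp add: matrix_def vec_eq_iff row_def mat_def axis_def)
    then have 1: "det (matrix ?h) = 1"
      using det_row_operation[OF \<open>m \<noteq> n\<close>, of "mat 1" 1] by simp
    have meq: "measure lebesgue (?h ` (cbox a b)) = measure lebesgue (cbox a b)" for a b
    proof (cases "cbox a b = {}")
      case True then show ?thesis by simp
    next
      case False
      then have ne: "(+) (\<chi> i. if i = n then - a $ n else 0) ` cbox a b \<noteq> {}"
        by auto
      let ?v = "\<chi> i. if i = n then - a $ n else 0"
      have "?h ` cbox a b
            = (+) (\<chi> i. if i = m \<or> i = n then a $ n else 0) ` ?h ` (+) ?v ` (cbox a b)"
        using \<open>m \<noteq> n\<close> unfolding image_comp o_def by (force simp: vec_eq_iff)
      then have "measure lebesgue (?h ` (cbox a b))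
               = measure lebesgue ((\<lambda>v. \<chi> i. if i = m then v $ m + v $ n else v $ i) `
                                   (+) ?v ` cbox a b)"
        by (rule ssubst) (rule measure_translation)
      also have "\<dots> = measure lebesgue ((\<lambda>v. \<chi> i. if i = m then v $ m + v $ n else v $ i) ` cbox (?v +a) (?v + b))"
        by (metis (no_types, lifting) cbox_translation)
      also have "\<dots> = measure lebesgue ((+) ?v ` cbox a b)"
        apply (subst measure_shear_interval)
        using \<open>m \<noteq> n\<close> ne apply auto
        apply (simp add: cbox_translation)
        by (metis cbox_borel cbox_translation measure_completion sets_lborel)
      also have "\<dots> = measure lebesgue (cbox a b)"
        by (rule measure_translation)
        finally show ?thesis .
      qed
    show "?h ` S \<in> lmeasurable \<and> ?Q ?h S"
      using measure_linear_sufficient [OF lin \<open>S \<in> lmeasurable\<close>] meq 1 by force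
  qed
  with assms show ?thesis by metis
qed



lemma emeasure_linear_image:
  fixes f :: "real^'n \<Rightarrow> real^'n"
  assumes f: "linear f" and S: "S \<in> sets borel" "emeasure lborel S < \<infinity>" and fS: "f ` S \<in> sets borel"
  shows "emeasure lborel (f ` S) = ennreal \<bar>det (matrix f)\<bar> * emeasure lborel S"
proof -
  have Sl: "S \<in> lmeasurable" using S by (simp add: fmeasurable_def emeasure_completion)
  then have *: "f ` S \<in> lmeasurable" "measure lebesgue (f ` S) = \<bar>det (matrix f)\<bar> * measure lebesgue S"
    using my_measure_linear_image[OF f Sl] by auto
  have "emeasure lborel (f ` S) = emeasure lebesgue (f ` S)" using fS by (simp add: emeasure_completion)
  also have "\<dots> = ennreal (measure lebesgue (f ` S))" using * by (simp add: emeasure_eq_measure2)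
  also have "\<dots> = ennreal \<bar>det (matrix f)\<bar> * ennreal (measure lebesgue S)"
    using * by (simp add: ennreal_mult)
  also have "ennreal (measure lebesgue S) = emeasure lebesgue S" using Sl by (simp add: emeasure_eq_measure2)
  also have "\<dots> = emeasure lborel S" using S by (simp add: emeasure_completion)
  finally show ?thesis .
qed


lemma lborel_affine_cov:
  fixes V :: "real^'n^'n" and m :: "real^'n"
  assumes dV: "det V \<noteq> 0"
  shows "lborel = density (distr lborel borel (\<lambda>w. m + V *v w)) (\<lambda>_. ennreal \<bar>det V\<bar>)"
proof (rule lborel_eqI)
  define T where "T = (\<lambda>w. m + V *v w)"
  define Vi where "Vi = matrix_inv V"
  have inv: "invertible V" using dV by (simp add: invertible_det_nz)
  have VVi: "V ** Vi = mat 1" "Vi ** V = mat 1" using inv_props[OF inv] unfolding Vi_def by auto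
  have Tm[measurable]: "T \<in> borel_measurable borel" unfolding T_def
    by (intro borel_measurable_continuous_onI continuous_intros matrix_vector_mult_linear_continuous_on)
  fix l u :: "real^'n" assume le: "\<And>b. b \<in> Basis \<Longrightarrow> l \<bullet> b \<le> u \<bullet> b"
  have pre: "T -` box l u = (\<lambda>x. Vi *v x) ` box (l - m) (u - m)"
  proof (intro equalityI subsetI)
    fix x assume "x \<in> T -` box l u"
    then have "m + V *v x \<in> box l u" by (simp add: T_def)
    then have "V *v x \<in> box (l - m) (u - m)" unfolding mem_box_cart
      by (simp add: less_diff_eq diff_less_eq add.commute)
    moreover have "x = Vi *v (V *v x)" using VVi by (simp add: matrix_vector_mul_assoc)
    ultimately show "x \<in> (\<lambda>x. Vi *v x) ` box (l - m) (u - m)" by blast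
  next
    fix z assume "z \<in> (\<lambda>x. Vi *v x) ` box (l - m) (u - m)"
    then obtain y where z: "z = Vi *v y" and "y \<in> box (l - m) (u - m)" by blast
    moreover have "V *v (Vi *v y) = y" using VVi by (simp add: matrix_vector_mul_assoc)
    ultimately have "m + V *v (Vi *v y) \<in> box l u" unfolding mem_box_cart
      by (simp add: less_diff_eq diff_less_eq add.commute)
    then show "z \<in> T -` box l u" by (simp add: T_def z)
  qed
  have preB: "T -` box l u \<in> sets borel"
    using measurable_sets_borel[OF Tm, of "box l u"] by simp
  have le': "\<And>b. b \<in> Basis \<Longrightarrow> (l - m) \<bullet> b \<le> (u - m) \<bullet> b" using le by (simp add: inner_diff_left)
  have "emeasure (density (distr lborel borel T) (\<lambda>_. ennreal \<bar>det V\<bar>)) (box l u)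
        = ennreal \<bar>det V\<bar> * emeasure lborel (T -` box l u)"
    by (simp add: emeasure_density_const emeasure_distr)
  also have "emeasure lborel (T -` box l u) = ennreal \<bar>det Vi\<bar> * emeasure lborel (box (l - m) (u - m))"
    unfolding pre
    by (subst emeasure_linear_image) (use preB pre emeasure_lborel_box_eq[of "l - m" "u - m"] in \<open>auto simp: matrix_vector_mul_linear\<close>)
  also have "emeasure lborel (box (l - m) (u - m)) = ennreal (\<Prod>b\<in>Basis. (u - l) \<bullet> b)"
    using le' by (simp add: emeasure_lborel_box_eq)
  also have "ennreal \<bar>det V\<bar> * (ennreal \<bar>det Vi\<bar> * ennreal (\<Prod>b\<in>Basis. (u - l) \<bullet> b))
           = ennreal (\<bar>det V\<bar> * \<bar>det Vi\<bar> * (\<Prod>b\<in>Basis. (u - l) \<bullet> b))"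
  proof -
    have pn: "0 \<le> (\<Prod>b\<in>Basis. (u - l) \<bullet> b)"
      by (rule prod_nonneg) (use le in \<open>simp add: inner_diff_left\<close>)
    show ?thesis using pn by (simp add: ennreal_mult mult.assoc)
  qed
  also have "\<bar>det V\<bar> * \<bar>det Vi\<bar> = 1"
    using arg_cong[OF VVi(1), of det] by (simp add: det_mul abs_mult[symmetric])
  finally show "emeasure (density (distr lborel borel (\<lambda>w. m + V *v w)) (\<lambda>_. ennreal \<bar>det V\<bar>)) (box l u) = (\<Prod>b\<in>Basis. (u - l) \<bullet> b)"
    unfolding T_def by simp
qed simp

lemma integral_affine_cov:
  fixes V :: "real^'n^'n" and m :: "real^'n" and F :: "real^'n \<Rightarrow> real"
  assumes dV: "det V \<noteq> 0" and F[measurable]: "F \<in> borel_measurable borel"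
  shows "(\<integral>x. F x \<partial>lborel) = \<bar>det V\<bar> * (\<integral>w. F (m + V *v w) \<partial>lborel)"
proof -
  have Tm[measurable]: "(\<lambda>w. m + V *v w) \<in> borel_measurable borel"
    by (intro borel_measurable_continuous_onI continuous_intros matrix_vector_mult_linear_continuous_on)
  have "(\<integral>x. F x \<partial>lborel) = (\<integral>x. F x \<partial>density (distr lborel borel (\<lambda>w. m + V *v w)) (\<lambda>_. ennreal \<bar>det V\<bar>))"
    using lborel_affine_cov[OF dV, of m] by simp
  also have "\<dots> = (\<integral>x. \<bar>det V\<bar> *\<^sub>R F x \<partial>distr lborel borel (\<lambda>w. m + V *v w))"
    by (rule integral_density) auto
  also have "\<dots> = (\<integral>w. \<bar>det V\<bar> *\<^sub>R F (m + V *v w) \<partial>lborel)"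
    by (rule integral_distr) auto
  also have "\<dots> = \<bar>det V\<bar> * (\<integral>w. F (m + V *v w) \<partial>lborel)" by simp
  finally show ?thesis .
qed



lemma diagm_mult: "diagm \<alpha> *v w = (\<chi> i. \<alpha> i * w$i)"
proof -
  have "(\<Sum>j\<in>UNIV. (if i = j then \<alpha> i else 0) * w $ j) = \<alpha> i * w$i" for i
    by (simp add: if_distrib[of "\<lambda>x. x * _"] cong: if_cong)
  then show ?thesis by (simp add: vec_eq_iff matrix_vector_mult_def diagm_def)
qed

lemma det_diagm: "det (diagm \<alpha> :: real^'n^'n) = (\<Prod>i\<in>UNIV. \<alpha> i)"
  by (subst det_diagonal) (auto simp: diagm_def)

lemma mat1_diagm: "(mat 1 :: real^'n^'n) = diagm (\<lambda>_. 1)"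
  by (simp add: vec_eq_iff mat_def diagm_def)

lemma quad_V: "(V *v w) \<bullet> (A *v (V *v w)) = w \<bullet> ((transpose V ** A ** V) *v (w::real^'n))"
proof -
  have "w \<bullet> ((transpose V ** A ** V) *v w) = w \<bullet> (transpose V *v (A *v (V *v w)))"
    by (simp add: matrix_vector_mul_assoc matrix_mul_assoc)
  also have "\<dots> = (V *v w) \<bullet> (A *v (V *v w))"
    using inner_mat[of w "transpose V" "A *v (V *v w)"] by (simp only: transpose_transpose)
  finally show ?thesis by simp
qed

lemma quad_diag: "w \<bullet> (diagm \<alpha> *v w) = (\<Sum>i\<in>UNIV. \<alpha> i * (w$i)^2)"
  by (simp add: diagm_mult inner_vec_def power2_eq_square mult.left_commute)

lemma det_inv: assumes "invertible (S::real^'n^'n)" shows "det S * det (matrix_inv S) = 1"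
  using arg_cong[OF inv_props(1)[OF assms], of det] by (simp add: det_mul)

lemma sqrt_prod: "finite I \<Longrightarrow> sqrt (prod f I) = (\<Prod>i\<in>I. sqrt (f i))"
  by (induction I rule: finite_induct) (auto simp: real_sqrt_mult)

lemma gauss_cont: "det S > 0 \<Longrightarrow> continuous_on UNIV (gauss_density m S)"
  unfolding gauss_density_def
  by (intro continuous_intros matrix_vector_mult_linear_continuous_on[THEN continuous_on_compose2]) auto

lemma gauss_meas: "det S > 0 \<Longrightarrow> gauss_density m S \<in> borel_measurable borel"
  using gauss_cont by (rule borel_measurable_continuous_onI)

lemma gauss_pos: "det S > 0 \<Longrightarrow> gauss_density m S x > 0"
  unfolding gauss_density_def by simp

lemma gauss_ln: assumes "det (S::real^'n^'n) > 0"
  shows "ln (gauss_density m S x) = -(1/2) * ((x - m) \<bullet> (matrix_inv S *v (x - m))) - (1/2) * ln ((2*pi)^CARD('n) * det S)"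
  using assms unfolding gauss_density_def by (simp add: ln_div ln_sqrt)

lemma nd_alt: assumes "\<alpha> > 0"
  shows "normal_density 0 (1 / sqrt \<alpha>) t = sqrt (\<alpha> / (2*pi)) * exp (- (\<alpha> * t^2) / 2)"
  using assms unfolding normal_density_def
  by (simp add: power_divide real_sqrt_divide field_simps)


lemma det_rel:
  fixes S V :: "real^'n^'n"
  assumes S: "invertible S" and VA: "transpose V ** matrix_inv S ** V = diagm \<alpha>"
    and \<alpha>: "\<And>i. \<alpha> i > 0"
  shows "det V \<noteq> 0" "det S = (det V)^2 / (\<Prod>i\<in>UNIV. \<alpha> i)" "det S > 0"
proof -
  obtain PA where PA: "PA = (\<Prod>i\<in>UNIV. \<alpha> i)" by simp
  have P: "PA > 0" using \<alpha> unfolding PA by (simp add: prod_pos)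
  have 1: "(det V)^2 * det (matrix_inv S) = PA"
    using arg_cong[OF VA, of det] unfolding PA by (simp add: det_mul det_transpose det_diagm power2_eq_square algebra_simps)
  have 2: "det S * det (matrix_inv S) = 1" by (rule det_inv[OF S])
  show dV: "det V \<noteq> 0"
  proof
    assume "det V = 0"
    then have "PA = 0" using 1 by simp
    then show False using P by simp
  qed
  have "det S * PA = (det V)^2 * (det S * det (matrix_inv S))" unfolding 1[symmetric] by (simp add: algebra_simps)
  then have "det S * PA = (det V)^2" using 2 by simp
  then have "det S = (det V)^2 / PA" using P by (simp add: field_simps)
  then show dS: "det S = (det V)^2 / (\<Prod>i\<in>UNIV. \<alpha> i)" unfolding PA .
  show "det S > 0" using \<open>det S = (det V)^2 / PA\<close> dV P by simp
qed

lemma KL_diag: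
  fixes m m' e :: "real^'n" and S S' V :: "real^'n^'n" and \<alpha> \<beta> :: "'n \<Rightarrow> real"
  assumes S: "invertible S" and S': "invertible S'"
    and VA: "transpose V ** matrix_inv S ** V = diagm \<alpha>"
    and VA': "transpose V ** matrix_inv S' ** V = diagm \<beta>"
    and \<alpha>: "\<And>i. \<alpha> i > 0" and \<beta>: "\<And>i. \<beta> i > 0"
    and e: "m' - m = V *v e"
  shows "KL (gauss_density m S) (gauss_density m' S') =
     (1/2) * (\<Sum>i\<in>UNIV. \<beta> i / \<alpha> i - 1 + \<beta> i * (e$i)^2 + ln (\<alpha> i) - ln (\<beta> i))"
proof -
  note d1 = det_rel[OF S VA \<alpha>] and d2 = det_rel[OF S' VA' \<beta>]
  define n where "n = CARD('n)"
  define c :: real where "c = (2*pi)^n"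
  have c0: "c > 0" unfolding c_def by simp
  define PA where "PA = (\<Prod>i\<in>UNIV. \<alpha> i)"
  define PB where "PB = (\<Prod>i\<in>UNIV. \<beta> i)"
  have PA: "PA > 0" "PB > 0" unfolding PA_def PB_def using \<alpha> \<beta> by (simp_all add: prod_pos)
  have ne: "\<alpha> i \<noteq> 0" "\<beta> i \<noteq> 0" for i using \<alpha>[of i] \<beta>[of i] by auto
  define p where "p = gauss_density m S"
  define p' where "p' = gauss_density m' S'"
  define F where "F x = p x * ln (p x / p' x)" for x
  have pm[measurable]: "p \<in> borel_measurable borel" "p' \<in> borel_measurable borel"
    unfolding p_def p'_def using gauss_meas d1(3) d2(3) by auto
  have Fm: "F \<in> borel_measurable borel" unfolding F_def by measurable
  define \<sigma> where "\<sigma> i = 1 / sqrt (\<alpha> i)" for i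
  have \<sigma>: "\<sigma> i > 0" for i unfolding \<sigma>_def using \<alpha>[of i] by simp
  define a where "a i = (\<beta> i - \<alpha> i) / 2" for i
  define b where "b i = - (\<beta> i * e$i)" for i
  define cc where "cc i = (\<beta> i * (e$i)^2 + ln (\<alpha> i) - ln (\<beta> i)) / 2" for i
  have point: "\<bar>det V\<bar> * F (m + V *v w) =
      (\<Prod>i\<in>UNIV. normal_density 0 (\<sigma> i) (w$i)) * (\<Sum>i\<in>UNIV. a i * (w$i)^2 + b i * w$i + cc i)" for w
  proof -
    define x where "x = m + V *v w"
    have Q: "(x - m) \<bullet> (matrix_inv S *v (x - m)) = (\<Sum>i\<in>UNIV. \<alpha> i * (w$i)^2)"
      unfolding x_def by (simp add: quad_V VA quad_diag)
    have xm': "x - m' = V *v (w - e)"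
      unfolding x_def using e by (simp add: matrix_vector_mult_diff_distrib algebra_simps)
    have Q': "(x - m') \<bullet> (matrix_inv S' *v (x - m')) = (\<Sum>i\<in>UNIV. \<beta> i * (w$i - e$i)^2)"
      unfolding xm' by (simp add: quad_V VA' quad_diag)
    have sq: "sqrt (c * det S) = \<bar>det V\<bar> * sqrt (c / PA)"
    proof -
      have "c * det S = (det V)^2 * (c / PA)" using d1(2) unfolding PA_def by simp
      then show ?thesis by (simp only: real_sqrt_mult real_sqrt_abs)
    qed
    have "\<bar>det V\<bar> * p x = exp (-(1/2) * (\<Sum>i\<in>UNIV. \<alpha> i * (w$i)^2)) / sqrt (c / PA)"
      unfolding p_def gauss_density_def Q c_def[symmetric] n_def[symmetric] sq using d1(1) by simp
    also have "\<dots> = sqrt (PA / c) * exp (-(1/2) * (\<Sum>i\<in>UNIV. \<alpha> i * (w$i)^2))"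
      using c0 PA by (simp add: real_sqrt_divide field_simps)
    also have "\<dots> = (\<Prod>i\<in>UNIV. normal_density 0 (\<sigma> i) (w$i))"
    proof -
      have "(\<Prod>i\<in>UNIV. normal_density 0 (\<sigma> i) (w$i)) =
            (\<Prod>i\<in>UNIV. sqrt (\<alpha> i / (2*pi)) * exp (- (\<alpha> i * (w$i)^2) / 2))"
        unfolding \<sigma>_def using \<alpha> by (simp add: nd_alt)
      also have "\<dots> = (\<Prod>i\<in>UNIV. sqrt (\<alpha> i / (2*pi))) * (\<Prod>i\<in>UNIV. exp (- (\<alpha> i * (w$i)^2) / 2))"
        by (rule prod.distrib)
      also have "(\<Prod>i\<in>UNIV. sqrt (\<alpha> i / (2*pi))) = sqrt (PA / c)"
        unfolding PA_def c_def n_def by (simp add: sqrt_prod[symmetric] prod_dividef)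
      also have "(\<Prod>i\<in>UNIV. exp (- (\<alpha> i * (w$i)^2) / 2)) = exp (\<Sum>i\<in>UNIV. - (\<alpha> i * (w$i)^2) / 2)"
        by (simp add: exp_sum)
      also have "(\<Sum>i\<in>UNIV. - (\<alpha> i * (w$i)^2) / 2) = -(1/2) * (\<Sum>i\<in>UNIV. \<alpha> i * (w$i)^2)"
        by (simp add: sum_distrib_left sum_divide_distrib[symmetric] sum_negf)
      finally show ?thesis by simp
    qed
    finally have dens: "\<bar>det V\<bar> * p x = (\<Prod>i\<in>UNIV. normal_density 0 (\<sigma> i) (w$i))" .
    have lnS: "ln (c * det S) = ln c + 2 * ln \<bar>det V\<bar> - (\<Sum>i\<in>UNIV. ln (\<alpha> i))"
    proof -
      have "ln (c * det S) = ln c + ln (det S)" using c0 d1(3) by (simp add: ln_mult)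
      also have "ln (det S) = ln ((det V)^2 / PA)" unfolding d1(2) PA_def ..
      also have "\<dots> = ln ((det V)^2) - ln PA" using d1(1) PA by (subst ln_div) auto
      also have "ln ((det V)^2) = 2 * ln \<bar>det V\<bar>" using d1(1) ln_realpow[of "\<bar>det V\<bar>" 2] by simp
      also have "ln PA = (\<Sum>i\<in>UNIV. ln (\<alpha> i))" unfolding PA_def using \<alpha> ne by (subst ln_prod) auto
      finally show ?thesis by simp
    qed
    have lnS': "ln (c * det S') = ln c + 2 * ln \<bar>det V\<bar> - (\<Sum>i\<in>UNIV. ln (\<beta> i))"
    proof -
      have "ln (c * det S') = ln c + ln (det S')" using c0 d2(3) by (simp add: ln_mult)
      also have "ln (det S') = ln ((det V)^2 / PB)" unfolding d2(2) PB_def ..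
      also have "\<dots> = ln ((det V)^2) - ln PB" using d1(1) PA by (subst ln_div) auto
      also have "ln ((det V)^2) = 2 * ln \<bar>det V\<bar>" using d1(1) ln_realpow[of "\<bar>det V\<bar>" 2] by simp
      also have "ln PB = (\<Sum>i\<in>UNIV. ln (\<beta> i))" unfolding PB_def using \<beta> ne by (subst ln_prod) auto
      finally show ?thesis by simp
    qed
    have "ln (p x / p' x) = ln (p x) - ln (p' x)"
      unfolding p_def p'_def using gauss_pos[OF d1(3), of m x] gauss_pos[OF d2(3), of m' x] by (simp add: ln_div)
    also have "\<dots> = -(1/2) * (\<Sum>i\<in>UNIV. \<alpha> i * (w$i)^2) + (1/2) * (\<Sum>i\<in>UNIV. \<beta> i * (w$i - e$i)^2)
                   + (1/2) * ((\<Sum>i\<in>UNIV. ln (\<alpha> i)) - (\<Sum>i\<in>UNIV. ln (\<beta> i)))"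
      unfolding p_def p'_def gauss_ln[OF d1(3)] gauss_ln[OF d2(3)] Q Q'
        c_def[symmetric] n_def[symmetric] lnS lnS' by (simp add: algebra_simps)
    also have "\<dots> = (\<Sum>i\<in>UNIV. a i * (w$i)^2 + b i * w$i + cc i)"
    proof -
      have "(\<Sum>i\<in>UNIV. a i * (w$i)^2 + b i * w$i + cc i) =
            (\<Sum>i\<in>UNIV. -(1/2) * (\<alpha> i * (w$i)^2) + (1/2) * (\<beta> i * (w$i - e$i)^2) + (1/2) * (ln (\<alpha> i) - ln (\<beta> i)))"
        unfolding a_def b_def cc_def by (intro sum.cong refl) (simp add: power2_diff field_simps)
      also have "\<dots> = (\<Sum>i\<in>UNIV. -(1/2) * (\<alpha> i * (w$i)^2)) + (\<Sum>i\<in>UNIV. (1/2) * (\<beta> i * (w$i - e$i)^2))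
                   + (\<Sum>i\<in>UNIV. (1/2) * (ln (\<alpha> i) - ln (\<beta> i)))"
        by (simp only: sum.distrib)
      also have "\<dots> = -(1/2) * (\<Sum>i\<in>UNIV. \<alpha> i * (w$i)^2) + (1/2) * (\<Sum>i\<in>UNIV. \<beta> i * (w$i - e$i)^2)
                   + (1/2) * ((\<Sum>i\<in>UNIV. ln (\<alpha> i)) - (\<Sum>i\<in>UNIV. ln (\<beta> i)))"
        by (simp only: sum_distrib_left[symmetric] sum_subtractf)
      finally show ?thesis by simp
    qed
    finally have lnp: "ln (p x / p' x) = (\<Sum>i\<in>UNIV. a i * (w$i)^2 + b i * w$i + cc i)" .
    show ?thesis unfolding F_def x_def[symmetric] using dens lnp by (simp add: mult.assoc[symmetric])
  qed
  have "KL (gauss_density m S) (gauss_density m' S') = (\<integral>x. F x \<partial>lborel)"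
    unfolding KL_def F_def p_def p'_def ..
  also have "\<dots> = \<bar>det V\<bar> * (\<integral>w. F (m + V *v w) \<partial>lborel)"
    by (rule integral_affine_cov[OF d1(1) Fm])
  also have "\<dots> = (\<integral>w. \<bar>det V\<bar> * F (m + V *v w) \<partial>lborel)" by simp
  also have "\<dots> = (\<integral>w. (\<Prod>i\<in>UNIV. normal_density 0 (\<sigma> i) (w$i)) * (\<Sum>i\<in>UNIV. a i * (w$i)^2 + b i * w$i + cc i) \<partial>lborel)"
    unfolding point ..
  also have "\<dots> = (\<Sum>i\<in>UNIV. a i * (\<sigma> i)^2 + cc i)"
    using gauss_prod[of \<sigma> a b cc, OF \<sigma>] by (simp add: has_bochner_integral_iff)
  also have "\<dots> = (1/2) * (\<Sum>i\<in>UNIV. \<beta> i / \<alpha> i - 1 + \<beta> i * (e$i)^2 + ln (\<alpha> i) - ln (\<beta> i))"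
  proof -
    have "a i * (\<sigma> i)^2 + cc i = (1/2) * (\<beta> i / \<alpha> i - 1 + \<beta> i * (e$i)^2 + ln (\<alpha> i) - ln (\<beta> i))" for i
      unfolding a_def \<sigma>_def cc_def using \<alpha>[of i] by (simp add: power_divide field_simps)
    then have "(\<Sum>i\<in>UNIV. a i * (\<sigma> i)^2 + cc i) = (\<Sum>i\<in>UNIV. (1/2) * (\<beta> i / \<alpha> i - 1 + \<beta> i * (e$i)^2 + ln (\<alpha> i) - ln (\<beta> i)))"
      by (intro sum.cong) auto
    then show ?thesis by (simp only: sum_distrib_left[symmetric])
  qed
  finally show ?thesis .
qed



theorem theorem3:
  fixes M :: real and mu1 mu2 :: "real^'n" and S1 S2 :: "real^'n^'n"
  assumes "M > 0"
    and "pos_def_matrix S1" and "pos_def_matrix S2"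
    and "KL (gauss_density mu1 S1) (gauss_density mu2 S2) \<ge> M"
  shows "KL (gauss_density mu2 S2) (gauss_density mu1 S1) \<ge>
    (1/2) * (1 / (- lambert_W_m1 (- exp (- (1 + 2*M))))
             - ln (1 / (- lambert_W_m1 (- exp (- (1 + 2*M))))) - 1)"
proof -
  have pdA1: "pos_def_matrix (matrix_inv S1)" by (rule pd_inv[OF assms(2)])
  have pdA2: "pos_def_matrix (matrix_inv S2)" by (rule pd_inv[OF assms(3)])
  have inv1: "invertible S1" by (rule pd_invertible[OF assms(2)])
  have inv2: "invertible S2" by (rule pd_invertible[OF assms(3)])
  obtain V :: "real^'n^'n" and \<mu> :: "'n \<Rightarrow> real" where V1: "transpose V ** matrix_inv S2 ** V = mat 1"
    and V2: "transpose V ** matrix_inv S1 ** V = diagm \<mu>" and \<mu>: "\<And>i. \<mu> i > 0"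
    using simult_diag[OF pdA2 pdA1] by blast
  have V1': "transpose V ** matrix_inv S2 ** V = diagm (\<lambda>_. 1)" using V1 by (simp add: mat1_diagm)
  have one: "\<And>i::'n. (1::real) > 0" by simp
  have dV: "det V \<noteq> 0" by (rule det_rel(1)[OF inv2 V1' one])
  have invV: "invertible V" using dV by (simp add: invertible_det_nz)
  define e where "e = matrix_inv V *v (mu1 - mu2)"
  have Ve: "V *v e = mu1 - mu2" unfolding e_def by (rule inv_vec(1)[OF invV])
  have neg: "V *v (- e) = - (V *v e)" by (simp add: vec_eq_iff matrix_vector_mult_def sum_negf)
  have e1: "mu2 - mu1 = V *v (- e)" unfolding neg Ve by simp
  have e2: "mu1 - mu2 = V *v e" using Ve by simp
  have fwd: "KL (gauss_density mu1 S1) (gauss_density mu2 S2) =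
      (1/2) * (\<Sum>i\<in>UNIV. 1 / \<mu> i - 1 + 1 * ((- e)$i)^2 + ln (\<mu> i) - ln 1)"
    by (rule KL_diag[OF inv1 inv2 V2 V1' \<mu> one e1])
  have bwd: "KL (gauss_density mu2 S2) (gauss_density mu1 S1) =
      (1/2) * (\<Sum>i\<in>UNIV. \<mu> i / 1 - 1 + \<mu> i * (e$i)^2 + ln 1 - ln (\<mu> i))"
    by (rule KL_diag[OF inv2 inv1 V1' V2 one \<mu> e2])
  have fwd': "KL (gauss_density mu1 S1) (gauss_density mu2 S2) = (1/2) * (\<Sum>i\<in>UNIV. ff (1 / \<mu> i) + (e$i)^2)"
    unfolding fwd using \<mu> by (intro arg_cong[where f="\<lambda>x. (1/2) * x"] sum.cong refl) (simp add: ff_def ln_div)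
  have bwd': "KL (gauss_density mu2 S2) (gauss_density mu1 S1) = (1/2) * (\<Sum>i\<in>UNIV. ff (1 / (1 / \<mu> i)) + (e$i)^2 / (1 / \<mu> i))"
    unfolding bwd using \<mu> by (intro arg_cong[where f="\<lambda>x. (1/2) * x"] sum.cong refl) (simp add: ff_def)
  show ?thesis unfolding bwd'
    by (rule final_real[OF assms(1)]) (use \<mu> assms(4) fwd' in auto)
qed

end
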